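(* Let $f,g_1,\dots,g_m,h_1,\dots,h_l\in\mathbb{R}[\mathbf{x}]$ with correlative sparsity data $(I_j,J_j,W_j)_{j\in[p]}$ as in the context. If for every integer $k\ge k_{\min}$ and every $j\in[p]$ the linear program $(\mathrm{LP}_{k,j})$ has a feasible solution $(\xi^{(j)}_k,(\mathbf{G}^{(j)}_{i,k})_{i\in\{0\}\cup J_j},(\mathbf{u}^{(j)}_{i,k})_{i\in W_j})$, then the POP of minimizing $f$ over $S(g)\cap V(h)$ has the constant trace property with correlative sparsity, with $\mathbf{P}^{(j)}_k=\mathrm{diag}((\mathbf{G}^{(j)}_{0,k})^{1/2},((\mathbf{G}^{(j)}_{i,k})^{1/2})_{i\in J_j})$ and $a^{(j)}_k=\xi^{(j)}_k$ for all $k\ge k_{\min}$ and $j\in[p]$.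
   Context: $\mathbf{x}=(x_1,\dots,x_n)$; $\mathbf{x}(I)=(x_i)_{i\in I}$; $\lceil p\rceil:=\lceil\deg(p)/2\rceil$; $k_{\min}:=\max\{\lceil f\rceil,\lceil g_i\rceil,\lceil h_j\rceil\}$; $S(g)=\{\mathbf{x}:g_i(\mathbf{x})\ge0\}$, $V(h)=\{\mathbf{x}:h_j(\mathbf{x})=0\}$. Sparsity data: $I_1,\dots,I_p\subseteq[n]$; $\{J_j\}$ a partition of $[m]$, $\{W_j\}$ a partition of $[l]$ with $g_i\in\mathbb{R}[\mathbf{x}(I_j)]$ ($i\in J_j$), $h_i\in\mathbb{R}[\mathbf{x}(I_j)]$ ($i\in W_j$). $\mathbb{N}^I_d:=\{\alpha\in\mathbb{N}^n:|\alpha|\le d,\mathrm{supp}(\alpha)\subseteq I\}$, $\mathbf{v}^I_d=(\mathbf{x}^\alpha)_{\alpha\in\mathbb{N}^I_d}$. $(\mathrm{LP}_{k,j})$: minimize $\xi$ over $\xi\in\mathbb{R}$, real diagonal $\mathbf{G}_0$ of size $|\mathbb{N}^{I_j}_k|$, real diagonal $\mathbf{G}_i$ of size $|\mathbb{N}^{I_j}_{k-\lceil g_i\rceil}|$ ($i\in J_j$), vectors $\mathbf{u}_i$ ($i\in W_j$) of length $|\mathbb{N}^{I_j}_{2(k-\lceil h_i\rceil)}|$, subject to $\mathbf{G}_i-\mathbf{I}\succeq0$ for $i\in\{0\}\cup J_j$ and the polynomial identity $\xi=(\mathbf{v}^{I_j}_k)^\top\mathbf{G}_0\mathbf{v}^{I_j}_k+\sum_{i\in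 J_j}g_i(\mathbf{v}^{I_j}_{k-\lceil g_i\rceil})^\top\mathbf{G}_i\mathbf{v}^{I_j}_{k-\lceil g_i\rceil}+\sum_{i\in W_j}h_i(\mathbf{v}^{I_j}_{2(k-\lceil h_i\rceil)})^\top\mathbf{u}_i$. For $\mathbf{y}=(y_\alpha)_{\alpha\in\mathbb{N}^n_{2k}}$: $\mathbf{M}_d(\mathbf{y},I)=(y_{\alpha+\beta})_{\alpha,\beta\in\mathbb{N}^I_d}$, $\mathbf{M}_d(q\mathbf{y},I)=(\sum_\gamma q_\gamma y_{\alpha+\beta+\gamma})_{\alpha,\beta\in\mathbb{N}^I_d}$; $\mathbf{D}_k(\mathbf{y},I_j):=\mathrm{diag}(\mathbf{M}_k(\mathbf{y},I_j),(\mathbf{M}_{k-\lceil g_i\rceil}(g_i\mathbf{y},I_j))_{i\in J_j})$. CTP with correlative sparsity with data $(a^{(j)}_k,\mathbf{P}^{(j)}_k)$ ($a^{(j)}_k>0$, $\mathbf{P}^{(j)}_k$ positive definite with the block structure of $\mathbf{D}_k(\mathbf{y},I_j)$) means: for all $k\ge k_{\min}$, $j\in[p]$, every $\mathbf{y}$ with $\mathbf{M}_{k-\lceil h_i\rceil}(h_i\mathbf{y},I_j)=0$ ($i\in W_j$) and $y_{\mathbf{0}}=1$ satisfies $\mathrm{trace}(\mathbf{P}^{(j)}_k\mathbf{D}_k(\mathbf{y},I_j)\mathbf{P}^{(j)}_k)=a^{(j)}_k$. *)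

theory Defs
  imports Complex_Main "HOL-Library.Poly_Mapping"
begin

text \<open>Multivariate real polynomials in the variables x_0, x_1, ... are represented
  as finitely supported maps from exponent vectors (monomials) to coefficients.
  Multiplication is the convolution product of Poly_Mapping.\<close>

type_synonym mon = "nat \<Rightarrow>\<^sub>0 nat"
type_synonym rpoly = "mon \<Rightarrow>\<^sub>0 real"

definition mdeg :: "mon \<Rightarrow> nat" where
  "mdeg \<alpha> = (\<Sum>i\<in>Poly_Mapping.keys \<alpha>. Poly_Mapping.lookup \<alpha> i)"

definition pdeg :: "rpoly \<Rightarrow> nat" where
  "pdeg q = Max (insert 0 (mdeg ` Poly_Mapping.keys q))"

definition hdeg :: "rpoly \<Rightarrow> nat" where
  "hdeg q = (pdeg q + 1) div 2"

definition pvars :: "rpoly \<Rightarrow> nat set" where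
  "pvars q = (\<Union>\<alpha>\<in>Poly_Mapping.keys q. Poly_Mapping.keys \<alpha>)"

definition pconst :: "real \<Rightarrow> rpoly" where
  "pconst c = Poly_Mapping.single 0 c"

definition peval :: "rpoly \<Rightarrow> (nat \<Rightarrow> real) \<Rightarrow> real" where
  "peval q x = (\<Sum>\<alpha>\<in>Poly_Mapping.keys q. Poly_Mapping.lookup q \<alpha> * (\<Prod>i\<in>Poly_Mapping.keys \<alpha>. x i ^ Poly_Mapping.lookup \<alpha> i))"

definition Nset :: "nat set \<Rightarrow> nat \<Rightarrow> mon set" where
  "Nset I d = {\<alpha>. mdeg \<alpha> \<le> d \<and> Poly_Mapping.keys \<alpha> \<subseteq> I}"

definition mmult :: "'a set \<Rightarrow> ('a \<Rightarrow> 'a \<Rightarrow> real) \<Rightarrow> ('a \<Rightarrow> 'a \<Rightarrow> real) \<Rightarrow> ('a \<Rightarrow> 'a \<Rightarrow> real)" where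
  "mmult S A B = (\<lambda>a c. \<Sum>b\<in>S. A a b * B b c)"

definition mtrace :: "'a set \<Rightarrow> ('a \<Rightarrow> 'a \<Rightarrow> real) \<Rightarrow> real" where
  "mtrace S A = (\<Sum>a\<in>S. A a a)"

definition msym :: "'a set \<Rightarrow> ('a \<Rightarrow> 'a \<Rightarrow> real) \<Rightarrow> bool" where
  "msym S A \<longleftrightarrow> (\<forall>a\<in>S. \<forall>b\<in>S. A a b = A b a)"

definition qform :: "'a set \<Rightarrow> ('a \<Rightarrow> 'a \<Rightarrow> real) \<Rightarrow> ('a \<Rightarrow> real) \<Rightarrow> real" where
  "qform S A v = (\<Sum>a\<in>S. \<Sum>b\<in>S. v a * A a b * v b)"

definition psd :: "'a set \<Rightarrow> ('a \<Rightarrow> 'a \<Rightarrow> real) \<Rightarrow> bool" where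
  "psd S A \<longleftrightarrow> msym S A \<and> (\<forall>v. qform S A v \<ge> 0)"

definition pdef :: "'a set \<Rightarrow> ('a \<Rightarrow> 'a \<Rightarrow> real) \<Rightarrow> bool" where
  "pdef S A \<longleftrightarrow> msym S A \<and> (\<forall>v. (\<exists>a\<in>S. v a \<noteq> 0) \<longrightarrow> qform S A v > 0)"

definition mdiagonal :: "'a set \<Rightarrow> ('a \<Rightarrow> 'a \<Rightarrow> real) \<Rightarrow> bool" where
  "mdiagonal S A \<longleftrightarrow> (\<forall>a\<in>S. \<forall>b\<in>S. a \<noteq> b \<longrightarrow> A a b = 0)"

definition msqrt :: "'a set \<Rightarrow> ('a \<Rightarrow> 'a \<Rightarrow> real) \<Rightarrow> ('a \<Rightarrow> 'a \<Rightarrow> real)" where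
  "msqrt S A = (THE R. psd S R \<and> (\<forall>a\<in>S. \<forall>b\<in>S. mmult S R R a b = A a b)
                       \<and> (\<forall>a b. a \<notin> S \<or> b \<notin> S \<longrightarrow> R a b = 0))"

text \<open>Polynomials v^T G v and v^T u built from the monomial vector indexed by S.\<close>
definition qpoly :: "mon set \<Rightarrow> (mon \<Rightarrow> mon \<Rightarrow> real) \<Rightarrow> rpoly" where
  "qpoly S G = (\<Sum>\<alpha>\<in>S. \<Sum>\<beta>\<in>S. Poly_Mapping.single (\<alpha> + \<beta>) (G \<alpha> \<beta>))"

definition lpoly :: "mon set \<Rightarrow> (mon \<Rightarrow> real) \<Rightarrow> rpoly" where
  "lpoly S u = (\<Sum>\<alpha>\<in>S. Poly_Mapping.single \<alpha> (u \<alpha>))"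

definition moment_mat :: "(mon \<Rightarrow> real) \<Rightarrow> mon \<Rightarrow> mon \<Rightarrow> real" where
  "moment_mat y \<alpha> \<beta> = y (\<alpha> + \<beta>)"

definition loc_mat :: "rpoly \<Rightarrow> (mon \<Rightarrow> real) \<Rightarrow> mon \<Rightarrow> mon \<Rightarrow> real" where
  "loc_mat q y \<alpha> \<beta> = (\<Sum>\<gamma>\<in>Poly_Mapping.keys q. Poly_Mapping.lookup q \<gamma> * y (\<alpha> + \<beta> + \<gamma>))"

definition kmin :: "rpoly \<Rightarrow> (nat \<Rightarrow> rpoly) \<Rightarrow> nat \<Rightarrow> (nat \<Rightarrow> rpoly) \<Rightarrow> nat \<Rightarrow> nat" where
  "kmin f g m h l = Max ({hdeg f} \<union> hdeg ` g ` {..<m} \<union> hdeg ` h ` {..<l})"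

text \<open>Blocks of D_k(y,I_j): block None is the moment matrix, block Some i the
  localizing matrix of g_i (i in J_j).\<close>
definition blocks :: "nat set \<Rightarrow> nat option set" where
  "blocks Jj = insert None (Some ` Jj)"

definition bdeg :: "(nat \<Rightarrow> rpoly) \<Rightarrow> nat \<Rightarrow> nat option \<Rightarrow> nat" where
  "bdeg g k b = (case b of None \<Rightarrow> k | Some i \<Rightarrow> k - hdeg (g i))"

definition bidx :: "(nat \<Rightarrow> rpoly) \<Rightarrow> nat set \<Rightarrow> nat set \<Rightarrow> nat \<Rightarrow> nat option \<Rightarrow> mon set" where
  "bidx g Ij Jj k b = Nset Ij (bdeg g k b)"

definition didx :: "(nat \<Rightarrow> rpoly) \<Rightarrow> nat set \<Rightarrow> nat set \<Rightarrow> nat \<Rightarrow> (nat option \<times> mon) set" where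
  "didx g Ij Jj k = {(b, \<alpha>). b \<in> blocks Jj \<and> \<alpha> \<in> bidx g Ij Jj k b}"

definition blockdiag :: "(nat option \<Rightarrow> mon \<Rightarrow> mon \<Rightarrow> real) \<Rightarrow> (nat option \<times> mon) \<Rightarrow> (nat option \<times> mon) \<Rightarrow> real" where
  "blockdiag B = (\<lambda>(b, \<alpha>) (b', \<beta>). if b = b' then B b \<alpha> \<beta> else 0)"

definition Dmat :: "(nat \<Rightarrow> rpoly) \<Rightarrow> (mon \<Rightarrow> real) \<Rightarrow> (nat option \<times> mon) \<Rightarrow> (nat option \<times> mon) \<Rightarrow> real" where
  "Dmat g y = blockdiag (\<lambda>b. case b of None \<Rightarrow> moment_mat y | Some i \<Rightarrow> loc_mat (g i) y)"

text \<open>Feasibility of (LP_{k,j}) at (xi, G, u): G b is the (diagonal) matrix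
  G_0 (b = None) or G_i (b = Some i), u i the vector u_i.\<close>
definition lp_feasible ::
  "(nat \<Rightarrow> rpoly) \<Rightarrow> (nat \<Rightarrow> rpoly) \<Rightarrow> nat set \<Rightarrow> nat set \<Rightarrow> nat set \<Rightarrow> nat \<Rightarrow>
   real \<Rightarrow> (nat option \<Rightarrow> mon \<Rightarrow> mon \<Rightarrow> real) \<Rightarrow> (nat \<Rightarrow> mon \<Rightarrow> real) \<Rightarrow> bool" where
  "lp_feasible g h Ij Jj Wj k \<xi> G u \<longleftrightarrow>
     (\<forall>b\<in>blocks Jj. mdiagonal (bidx g Ij Jj k b) (G b)
        \<and> psd (bidx g Ij Jj k b) (\<lambda>\<alpha> \<beta>. G b \<alpha> \<beta> - (if \<alpha> = \<beta> then 1 else 0))) \<and>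
     pconst \<xi> = qpoly (Nset Ij k) (G None)
        + (\<Sum>i\<in>Jj. g i * qpoly (Nset Ij (k - hdeg (g i))) (G (Some i)))
        + (\<Sum>i\<in>Wj. h i * lpoly (Nset Ij (2 * (k - hdeg (h i)))) (u i))"

definition ctp_cs ::
  "rpoly \<Rightarrow> (nat \<Rightarrow> rpoly) \<Rightarrow> nat \<Rightarrow> (nat \<Rightarrow> rpoly) \<Rightarrow> nat \<Rightarrow> nat \<Rightarrow>
   (nat \<Rightarrow> nat set) \<Rightarrow> (nat \<Rightarrow> nat set) \<Rightarrow> (nat \<Rightarrow> nat set) \<Rightarrow>
   (nat \<Rightarrow> nat \<Rightarrow> real) \<Rightarrow>
   (nat \<Rightarrow> nat \<Rightarrow> (nat option \<times> mon) \<Rightarrow> (nat option \<times> mon) \<Rightarrow> real) \<Rightarrow> bool" where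
  "ctp_cs f g m h l p I J W a P \<longleftrightarrow>
     (\<forall>k \<ge> kmin f g m h l. \<forall>j<p.
        a k j > 0
      \<and> pdef (didx g (I j) (J j) k) (P k j)
      \<and> (\<forall>x\<in>didx g (I j) (J j) k. \<forall>z\<in>didx g (I j) (J j) k. fst x \<noteq> fst z \<longrightarrow> P k j x z = 0)
      \<and> (\<forall>y. (\<forall>i\<in>W j. \<forall>\<alpha>\<in>Nset (I j) (k - hdeg (h i)). \<forall>\<beta>\<in>Nset (I j) (k - hdeg (h i)).
                 loc_mat (h i) y \<alpha> \<beta> = 0) \<longrightarrow> y 0 = 1 \<longrightarrow>
             mtrace (didx g (I j) (J j) k)
               (mmult (didx g (I j) (J j) k)
                  (mmult (didx g (I j) (J j) k) (P k j) (Dmat g y)) (P k j)) = a k j))"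

end

theory Submission
  imports Defs
begin


definition Lf :: "(mon \<Rightarrow> real) \<Rightarrow> rpoly \<Rightarrow> real" where
  "Lf y p = (\<Sum>\<gamma>\<in>Poly_Mapping.keys p. Poly_Mapping.lookup p \<gamma> * y \<gamma>)"

lemma Lf_superset:
  assumes "finite K" "Poly_Mapping.keys p \<subseteq> K"
  shows "Lf y p = (\<Sum>\<gamma>\<in>K. Poly_Mapping.lookup p \<gamma> * y \<gamma>)"
  unfolding Lf_def
  by (rule sum.mono_neutral_left) (use assms in \<open>auto simp: not_in_keys_iff_lookup_eq_zero\<close>)

lemma Lf_add: "Lf y (p + q) = Lf y p + Lf y q"
proof -
  let ?K = "Poly_Mapping.keys p \<union> Poly_Mapping.keys q"
  have "Lf y (p + q) = (\<Sum>\<gamma>\<in>?K. Poly_Mapping.lookup (p+q) \<gamma> * y \<gamma>)"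
    by (rule Lf_superset) (use keys_add[of p q] in auto)
  also have "\<dots> = (\<Sum>\<gamma>\<in>?K. Poly_Mapping.lookup p \<gamma> * y \<gamma>) + (\<Sum>\<gamma>\<in>?K. Poly_Mapping.lookup q \<gamma> * y \<gamma>)"
    by (simp add: lookup_add distrib_right sum.distrib)
  also have "\<dots> = Lf y p + Lf y q"
    by (subst (1 2) Lf_superset[of ?K]) auto
  finally show ?thesis .
qed

lemma Lf_zero [simp]: "Lf y 0 = 0"
  by (simp add: Lf_def)

lemma Lf_sum: "Lf y (\<Sum>a\<in>A. F a) = (\<Sum>a\<in>A. Lf y (F a))"
  by (induction A rule: infinite_finite_induct) (auto simp: Lf_add)

lemma Lf_single [simp]: "Lf y (Poly_Mapping.single a c) = c * y a"
  by (simp add: Lf_def)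

lemma poly_decomp: "p = (\<Sum>\<gamma>\<in>Poly_Mapping.keys p. Poly_Mapping.single \<gamma> (Poly_Mapping.lookup p \<gamma>))"
proof (rule poly_mapping_eqI)
  fix k
  show "Poly_Mapping.lookup p k = Poly_Mapping.lookup (\<Sum>\<gamma>\<in>Poly_Mapping.keys p. Poly_Mapping.single \<gamma> (Poly_Mapping.lookup p \<gamma>)) k"
    by (simp add: lookup_sum lookup_single when_def not_in_keys_iff_lookup_eq_zero)
qed

lemma Lf_mult_single:
  "Lf y (q * Poly_Mapping.single \<delta> c) = c * (\<Sum>\<gamma>\<in>Poly_Mapping.keys q. Poly_Mapping.lookup q \<gamma> * y (\<gamma> + \<delta>))"
proof -
  have "q * Poly_Mapping.single \<delta> c = (\<Sum>\<gamma>\<in>Poly_Mapping.keys q. Poly_Mapping.single \<gamma> (Poly_Mapping.lookup q \<gamma>) * Poly_Mapping.single \<delta> c)"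
    by (subst poly_decomp[of q]) (simp add: sum_distrib_right)
  then show ?thesis
    by (simp add: Lf_sum mult_single sum_distrib_left algebra_simps)
qed

lemma Lf_const [simp]: "Lf y (pconst c) = c * y 0"
  by (simp add: pconst_def)

definition mono :: "(nat \<Rightarrow> real) \<Rightarrow> mon \<Rightarrow> real" where
  "mono x \<alpha> = (\<Prod>i\<in>Poly_Mapping.keys \<alpha>. x i ^ Poly_Mapping.lookup \<alpha> i)"

lemma mono_superset:
  assumes "finite K" "Poly_Mapping.keys \<alpha> \<subseteq> K"
  shows "mono x \<alpha> = (\<Prod>i\<in>K. x i ^ Poly_Mapping.lookup \<alpha> i)"
  unfolding mono_def
  by (rule prod.mono_neutral_left) (use assms in \<open>auto simp: not_in_keys_iff_lookup_eq_zero\<close>)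

lemma mono_add: "mono x (a + b) = mono x a * mono x b"
proof -
  let ?K = "Poly_Mapping.keys a \<union> Poly_Mapping.keys b"
  have "mono x (a + b) = (\<Prod>i\<in>?K. x i ^ Poly_Mapping.lookup (a+b) i)"
    by (rule mono_superset) (use keys_add[of a b] in auto)
  also have "\<dots> = (\<Prod>i\<in>?K. x i ^ Poly_Mapping.lookup a i) * (\<Prod>i\<in>?K. x i ^ Poly_Mapping.lookup b i)"
    by (simp add: lookup_add power_add prod.distrib)
  also have "\<dots> = mono x a * mono x b"
    by (subst (1 2) mono_superset[of ?K]) auto
  finally show ?thesis .
qed

lemma mono_zero [simp]: "mono x 0 = 1"
  by (simp add: mono_def)

lemma keys_add_nat: "Poly_Mapping.keys (a + b :: mon) = Poly_Mapping.keys a \<union> Poly_Mapping.keys b"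
  by (auto simp: in_keys_iff lookup_add)

lemma mdeg_superset:
  assumes "finite K" "Poly_Mapping.keys \<alpha> \<subseteq> K"
  shows "mdeg \<alpha> = (\<Sum>i\<in>K. Poly_Mapping.lookup \<alpha> i)"
  unfolding mdeg_def
  by (rule sum.mono_neutral_left) (use assms in \<open>auto simp: not_in_keys_iff_lookup_eq_zero\<close>)

lemma mdeg_add: "mdeg (a + b) = mdeg a + mdeg b"
proof -
  let ?K = "Poly_Mapping.keys a \<union> Poly_Mapping.keys b"
  have "mdeg (a + b) = (\<Sum>i\<in>?K. Poly_Mapping.lookup (a+b) i)"
    by (rule mdeg_superset) (auto simp: keys_add_nat)
  also have "\<dots> = (\<Sum>i\<in>?K. Poly_Mapping.lookup a i) + (\<Sum>i\<in>?K. Poly_Mapping.lookup b i)"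
    by (simp add: lookup_add sum.distrib)
  also have "\<dots> = mdeg a + mdeg b"
    by (subst (1 2) mdeg_superset[of ?K]) auto
  finally show ?thesis .
qed

lemma mdeg_zero [simp]: "mdeg 0 = 0"
  by (simp add: mdeg_def)

lemma mdeg_single1 [simp]: "mdeg (Poly_Mapping.single i (1::nat)) = 1"
  by (simp add: mdeg_def)


lemma lookup_le_mdeg: "Poly_Mapping.lookup \<alpha> i \<le> mdeg \<alpha>"
proof (cases "i \<in> Poly_Mapping.keys \<alpha>")
  case True then show ?thesis unfolding mdeg_def by (intro member_le_sum) auto
qed (simp add: not_in_keys_iff_lookup_eq_zero)

lemma split_mon:
  "mdeg \<alpha> \<le> 2 * d \<Longrightarrow> \<exists>\<beta> \<gamma>. \<alpha> = \<beta> + \<gamma> \<and> mdeg \<beta> \<le> d \<and> mdeg \<gamma> \<le> d"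
proof (induction "mdeg \<alpha>" arbitrary: \<alpha>)
  case 0
  then show ?case by (intro exI[of _ \<alpha>] exI[of _ 0]) auto
next
  case (Suc n)
  then have "\<alpha> \<noteq> 0" by auto
  then obtain i where i: "i \<in> Poly_Mapping.keys \<alpha>" by (metis keys_eq_empty ex_in_conv)
  define \<alpha>' where "\<alpha>' = \<alpha> - Poly_Mapping.single i 1"
  have eq: "\<alpha> = \<alpha>' + Poly_Mapping.single i 1"
    using i unfolding \<alpha>'_def
    by (intro poly_mapping_eqI) (auto simp: lookup_add lookup_minus lookup_single when_def in_keys_iff)
  then have "mdeg \<alpha> = mdeg \<alpha>' + 1" by (metis mdeg_add mdeg_single1)
  then obtain \<beta> \<gamma> where bg: "\<alpha>' = \<beta> + \<gamma>" "mdeg \<beta> \<le> d" "mdeg \<gamma> \<le> d"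
    using Suc by (metis add_right_imp_eq add_leD1 Suc_eq_plus1)
  have deg: "mdeg \<beta> + mdeg \<gamma> + 1 \<le> 2 * d"
    using Suc.prems \<open>mdeg \<alpha> = mdeg \<alpha>' + 1\<close> bg(1) mdeg_add by simp
  have d1: "mdeg (Poly_Mapping.single i (1::nat)) = 1" by (rule mdeg_single1)
  show ?case
  proof (cases "mdeg \<beta> \<le> mdeg \<gamma>")
    case True
    have "\<alpha> = (\<beta> + Poly_Mapping.single i 1) + \<gamma>" using eq bg by (simp add: add_ac)
    moreover have "mdeg (\<beta> + Poly_Mapping.single i 1) \<le> d"
      unfolding mdeg_add d1 using True deg by linarith
    ultimately show ?thesis using bg by blast
  next
    case False
    have "\<alpha> = \<beta> + (\<gamma> + Poly_Mapping.single i 1)" using eq bg by (simp add: add_ac)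
    moreover have "mdeg (\<gamma> + Poly_Mapping.single i 1) \<le> d"
      unfolding mdeg_add d1 using False deg by linarith
    ultimately show ?thesis using bg by blast
  qed
qed

lemma finite_Nset:
  assumes "finite I" shows "finite (Nset I d)"
proof -
  have "Poly_Mapping.lookup ` Nset I d \<subseteq> {f. \<forall>x. (x \<in> I \<longrightarrow> f x \<in> {..d}) \<and> (x \<notin> I \<longrightarrow> f x = 0)}"
    by (auto simp: Nset_def not_in_keys_iff_lookup_eq_zero intro: order_trans[OF lookup_le_mdeg])
  moreover have "finite {f. \<forall>x. (x \<in> I \<longrightarrow> f x \<in> {..d}) \<and> (x \<notin> I \<longrightarrow> f x = (0::nat))}"
    by (rule finite_set_of_finite_funs) (use assms in auto)
  ultimately have "finite (Poly_Mapping.lookup ` Nset I d)" by (rule finite_subset)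
  then show ?thesis by (rule finite_imageD) (simp add: inj_on_def)
qed



lemma ifz_mult [simp]: "(if c then x else 0) * (y::real) = (if c then x*y else 0)"
  and mult_ifz [simp]: "y * (if c then x else 0) = (if c then y*x else 0)"
  by auto

lemma ifz_sub [simp]: "(x::real) - (if c then y else 0) = (if c then x - y else x)"
  by auto

lemma qform_zero_if_kernel:
  assumes "\<forall>a\<in>S. (\<Sum>b\<in>S. M a b * w b) = 0"
  shows "qform S M w = 0"
proof -
  have "qform S M w = (\<Sum>a\<in>S. w a * (\<Sum>b\<in>S. M a b * w b))"
    unfolding qform_def by (simp add: sum_distrib_left mult.assoc)
  also have "\<dots> = 0" using assms by simp
  finally show ?thesis .
qed

lemma psd_diag_ge1:
  assumes "psd S (\<lambda>\<alpha> \<beta>. A \<alpha> \<beta> - (if \<alpha> = \<beta> then 1 else 0))" "finite S" "a \<in> S"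
  shows "A a a \<ge> 1"
proof -
  let ?v = "\<lambda>c. if c = a then 1 else (0::real)"
  have "qform S (\<lambda>\<alpha> \<beta>. A \<alpha> \<beta> - (if \<alpha> = \<beta> then 1 else 0)) ?v \<ge> 0"
    using assms(1) unfolding psd_def by blast
  moreover have "qform S (\<lambda>\<alpha> \<beta>. A \<alpha> \<beta> - (if \<alpha> = \<beta> then 1 else 0)) ?v = A a a - 1"
    unfolding qform_def using assms(2,3) by (simp add: sum.delta sum.delta')
  ultimately show ?thesis by simp
qed

definition dsqrt :: "'a set \<Rightarrow> ('a \<Rightarrow> 'a \<Rightarrow> real) \<Rightarrow> ('a \<Rightarrow> 'a \<Rightarrow> real)" where
  "dsqrt S A = (\<lambda>a b. if a \<in> S \<and> b \<in> S \<and> a = b then sqrt (A a a) else 0)"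

lemma msqrt_diag:
  assumes fin: "finite S" and diag: "mdiagonal S A" and pos: "\<forall>a\<in>S. A a a > 0"
  shows "msqrt S A = dsqrt S A"
  unfolding msqrt_def
proof (rule the_equality)
  let ?R0 = "dsqrt S A"
  show "psd S ?R0 \<and> (\<forall>a\<in>S. \<forall>b\<in>S. mmult S ?R0 ?R0 a b = A a b) \<and> (\<forall>a b. a \<notin> S \<or> b \<notin> S \<longrightarrow> ?R0 a b = 0)"
  proof (intro conjI)
    have nn: "0 \<le> v x * sqrt (A x x) * v x" if "x \<in> S" for v x
    proof -
      have "v x * sqrt (A x x) * v x = sqrt (A x x) * (v x * v x)" by simp
      also have "\<dots> \<ge> 0" using pos that by (metis mult_nonneg_nonneg zero_le_square real_sqrt_ge_zero less_imp_le)
      finally show ?thesis .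
    qed
    show "psd S ?R0"
      using nn unfolding psd_def msym_def qform_def dsqrt_def
      using fin by (auto simp: sum.delta sum.delta' intro!: sum_nonneg)
    show "\<forall>a\<in>S. \<forall>b\<in>S. mmult S ?R0 ?R0 a b = A a b"
      using fin diag pos unfolding mmult_def dsqrt_def mdiagonal_def
      by (auto simp: sum.delta sum.delta')
    show "\<forall>a b. a \<notin> S \<or> b \<notin> S \<longrightarrow> ?R0 a b = 0"
      by (auto simp: dsqrt_def)
  qed
next
  fix R
  assume H: "psd S R \<and> (\<forall>a\<in>S. \<forall>b\<in>S. mmult S R R a b = A a b) \<and> (\<forall>a b. a \<notin> S \<or> b \<notin> S \<longrightarrow> R a b = 0)"
  then have psdR: "\<And>v. qform S R v \<ge> 0" and sq: "\<And>a b. a \<in> S \<Longrightarrow> b \<in> S \<Longrightarrow> (\<Sum>c\<in>S. R a c * R c b) = A a b"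
    and out: "\<And>a b. a \<notin> S \<or> b \<notin> S \<Longrightarrow> R a b = 0"
    unfolding psd_def mmult_def by blast+
  define s where "s a = sqrt (A a a)" for a
  have spos: "a \<in> S \<Longrightarrow> s a > 0" for a using pos by (simp add: s_def)
  have Adiag: "a \<in> S \<Longrightarrow> b \<in> S \<Longrightarrow> A a b = (if a = b then s a * s a else 0)" for a b
    using diag pos unfolding mdiagonal_def s_def by (auto simp: less_eq_real_def)
  have ss: "a \<in> S \<Longrightarrow> s a * s a = A a a" for a
    using pos by (simp add: s_def less_imp_le)
  have comm: "R a b * s b = s a * R a b" if ab: "a \<in> S" "b \<in> S" for a b
  proof -
    have "(\<Sum>c\<in>S. R a c * A c b) = (\<Sum>c\<in>S. R a c * (\<Sum>d\<in>S. R c d * R d b))"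
      by (rule sum.cong[OF refl]) (simp add: sq ab)
    also have "\<dots> = (\<Sum>d\<in>S. (\<Sum>c\<in>S. R a c * R c d) * R d b)"
      unfolding sum_distrib_left sum_distrib_right mult.assoc by (rule sum.swap)
    also have "\<dots> = (\<Sum>d\<in>S. A a d * R d b)"
      by (rule sum.cong[OF refl]) (simp add: sq ab)
    finally have e: "(\<Sum>c\<in>S. R a c * A c b) = (\<Sum>d\<in>S. A a d * R d b)" .
    have "(\<Sum>c\<in>S. R a c * A c b) = (\<Sum>c\<in>S. if c = b then R a c * (s b * s b) else 0)"
      by (rule sum.cong[OF refl]) (simp add: Adiag ab)
    also have "\<dots> = R a b * (s b * s b)" using ab fin by (simp add: sum.delta)
    finally have l: "(\<Sum>c\<in>S. R a c * A c b) = R a b * (s b * s b)" .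
    have "(\<Sum>d\<in>S. A a d * R d b) = (\<Sum>d\<in>S. if a = d then (s a * s a) * R d b else 0)"
      by (rule sum.cong[OF refl]) (simp add: Adiag ab)
    also have "\<dots> = (s a * s a) * R a b" using ab fin by (simp add: sum.delta)
    finally have r: "(\<Sum>d\<in>S. A a d * R d b) = (s a * s a) * R a b" .
    have "R a b * (s b * s b) = (s a * s a) * R a b" using e l r by simp
    then have "R a b = 0 \<or> s b * s b = s a * s a" by auto
    moreover have "s b * s b = s a * s a \<Longrightarrow> s b = s a"
      using ab ss[of a] ss[of b] by (simp add: s_def)
    ultimately show ?thesis by auto
  qed
  show "R = (dsqrt S A)"
  proof (intro ext)
    fix a b
    show "R a b = (dsqrt S A) a b"
    proof (cases "a \<in> S \<and> b \<in> S")
      case False then show ?thesis using out by (auto simp: dsqrt_def)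
    next
      case True
      then have bS: "b \<in> S" by auto
      define w where "w c = R c b - (dsqrt S A) c b" for c
      let ?M = "\<lambda>c d. R c d + (dsqrt S A) c d"
      have ker: "\<forall>c\<in>S. (\<Sum>d\<in>S. ?M c d * w d) = 0"
      proof
        fix c assume cS: "c \<in> S"
        have "(\<Sum>d\<in>S. ?M c d * w d) = (\<Sum>d\<in>S. R c d * R d b) - (\<Sum>d\<in>S. R c d * (dsqrt S A) d b)
               + (\<Sum>d\<in>S. (dsqrt S A) c d * R d b) - (\<Sum>d\<in>S. (dsqrt S A) c d * (dsqrt S A) d b)"
          by (simp add: w_def algebra_simps sum.distrib sum_subtractf)
        also have "\<dots> = A c b - R c b * s b + s c * R c b - (if c = b then s c * s c else 0)"
          using cS bS fin sq[of c b] by (simp add: dsqrt_def s_def sum.delta sum.delta')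
        also have "\<dots> = 0"
        proof (cases "c = b")
          case True then show ?thesis using Adiag[OF cS bS] by simp
        next
          case False
          then have "A c b = 0" using Adiag[OF cS bS] by simp
          then show ?thesis using comm[OF cS bS] False by (simp only: if_False)
        qed
        finally show "(\<Sum>d\<in>S. ?M c d * w d) = 0" .
      qed
      have q0: "qform S ?M w = 0" by (rule qform_zero_if_kernel[OF ker])
      have "qform S ?M w = qform S R w + qform S (dsqrt S A) w"
        unfolding qform_def by (simp add: distrib_left distrib_right sum.distrib)
      moreover have "qform S (dsqrt S A) w = (\<Sum>c\<in>S. s c * (w c)\<^sup>2)"
        unfolding qform_def
      proof (rule sum.cong[OF refl])
        fix c assume cS: "c \<in> S"
        have "(\<Sum>d\<in>S. w c * dsqrt S A c d * w d) = (\<Sum>d\<in>S. if c = d then s c * (w c)\<^sup>2 else 0)"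
          by (rule sum.cong[OF refl]) (auto simp: dsqrt_def s_def cS power2_eq_square)
        also have "\<dots> = s c * (w c)\<^sup>2" using cS fin by simp
        finally show "(\<Sum>d\<in>S. w c * dsqrt S A c d * w d) = s c * (w c)\<^sup>2" .
      qed
      ultimately have "qform S ?M w = qform S R w + (\<Sum>c\<in>S. s c * (w c)\<^sup>2)" by simp
      moreover have nn: "\<forall>c\<in>S. s c * (w c)\<^sup>2 \<ge> 0"
        using spos by (simp add: less_imp_le)
      moreover have "(\<Sum>c\<in>S. s c * (w c)\<^sup>2) \<ge> 0" using nn by (simp add: sum_nonneg)
      ultimately have "(\<Sum>c\<in>S. s c * (w c)\<^sup>2) = 0"
        using q0 psdR[of w] by linarith
      then have z: "\<forall>c\<in>S. s c * (w c)\<^sup>2 = 0" using sum_nonneg_eq_0_iff[OF fin, of "\<lambda>c. s c * (w c)\<^sup>2"] nn by simp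
      have "s a * (w a)\<^sup>2 = 0" using z True by blast
      then have "w a = 0" using True spos[of a] by simp

      then show ?thesis by (simp add: w_def)
    qed
  qed
qed

lemma trace_diag:
  assumes fin: "finite S" and P: "\<And>a b. a \<in> S \<Longrightarrow> b \<in> S \<Longrightarrow> P a b = (if a = b then s a else 0)"
  shows "mtrace S (mmult S (mmult S P D) P) = (\<Sum>a\<in>S. s a * s a * D a a)"
proof -
  have m1: "a \<in> S \<Longrightarrow> mmult S P D a c = s a * D a c" for a c
    unfolding mmult_def using fin by (simp add: P sum.delta sum.delta')
  have "a \<in> S \<Longrightarrow> mmult S (mmult S P D) P a a = s a * s a * D a a" for a
    unfolding mmult_def using fin by (simp add: P m1 sum.delta sum.delta')
  then show ?thesis unfolding mtrace_def by simp
qed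

lemma pdef_diag:
  assumes fin: "finite S" and P: "\<And>a b. a \<in> S \<Longrightarrow> b \<in> S \<Longrightarrow> P a b = (if a = b then s a else 0)"
    and spos: "\<And>a. a \<in> S \<Longrightarrow> s a > 0"
  shows "pdef S P"
  unfolding pdef_def
proof (intro conjI allI impI)
  show "msym S P" unfolding msym_def using P by auto
  fix v assume "\<exists>a\<in>S. v a \<noteq> (0::real)"
  then obtain a where a: "a \<in> S" "v a \<noteq> 0" by blast
  have "qform S P v = (\<Sum>c\<in>S. s c * (v c)\<^sup>2)"
    unfolding qform_def using fin by (simp add: P power2_eq_square sum.delta sum.delta' algebra_simps cong: if_cong)
  also have "\<dots> > 0"
    using a spos fin by (intro sum_pos2[of S a]) (auto simp: less_imp_le)
  finally show "qform S P v > 0" .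
qed



lemma Lf_qpoly:
  assumes "finite N" "mdiagonal N G0"
  shows "Lf y (qpoly N G0) = (\<Sum>\<alpha>\<in>N. G0 \<alpha> \<alpha> * y (\<alpha> + \<alpha>))"
proof -
  have "Lf y (qpoly N G0) = (\<Sum>\<alpha>\<in>N. \<Sum>\<beta>\<in>N. G0 \<alpha> \<beta> * y (\<alpha> + \<beta>))"
    unfolding qpoly_def by (simp add: Lf_sum)
  also have "\<dots> = (\<Sum>\<alpha>\<in>N. G0 \<alpha> \<alpha> * y (\<alpha> + \<alpha>))"
  proof (rule sum.cong[OF refl])
    fix \<alpha> assume a: "\<alpha> \<in> N"
    have "(\<Sum>\<beta>\<in>N. G0 \<alpha> \<beta> * y (\<alpha> + \<beta>)) = (\<Sum>\<beta>\<in>N. if \<alpha> = \<beta> then G0 \<alpha> \<alpha> * y (\<alpha> + \<alpha>) else 0)"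
      using assms(2) a unfolding mdiagonal_def by (intro sum.cong[OF refl]) auto
    also have "\<dots> = G0 \<alpha> \<alpha> * y (\<alpha> + \<alpha>)" using assms(1) a by simp
    finally show "(\<Sum>\<beta>\<in>N. G0 \<alpha> \<beta> * y (\<alpha> + \<beta>)) = G0 \<alpha> \<alpha> * y (\<alpha> + \<alpha>)" .
  qed
  finally show ?thesis .
qed

lemma Lf_mqpoly:
  assumes "finite N" "mdiagonal N G0"
  shows "Lf y (q * qpoly N G0) = (\<Sum>\<alpha>\<in>N. G0 \<alpha> \<alpha> * loc_mat q y \<alpha> \<alpha>)"
proof -
  have "Lf y (q * qpoly N G0) = (\<Sum>\<alpha>\<in>N. \<Sum>\<beta>\<in>N. G0 \<alpha> \<beta> * loc_mat q y \<alpha> \<beta>)"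
    unfolding qpoly_def loc_mat_def
    by (simp add: Lf_sum sum_distrib_left Lf_mult_single add_ac)
  also have "\<dots> = (\<Sum>\<alpha>\<in>N. G0 \<alpha> \<alpha> * loc_mat q y \<alpha> \<alpha>)"
  proof (rule sum.cong[OF refl])
    fix \<alpha> assume a: "\<alpha> \<in> N"
    have "(\<Sum>\<beta>\<in>N. G0 \<alpha> \<beta> * loc_mat q y \<alpha> \<beta>) = (\<Sum>\<beta>\<in>N. if \<alpha> = \<beta> then G0 \<alpha> \<alpha> * loc_mat q y \<alpha> \<alpha> else 0)"
      using assms(2) a unfolding mdiagonal_def by (intro sum.cong[OF refl]) auto
    also have "\<dots> = G0 \<alpha> \<alpha> * loc_mat q y \<alpha> \<alpha>" using assms(1) a by simp
    finally show "(\<Sum>\<beta>\<in>N. G0 \<alpha> \<beta> * loc_mat q y \<alpha> \<beta>) = G0 \<alpha> \<alpha> * loc_mat q y \<alpha> \<alpha>" .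
  qed
  finally show ?thesis .
qed

lemma Lf_mlpoly:
  assumes hc: "\<forall>\<alpha>\<in>Nset Ij d. \<forall>\<beta>\<in>Nset Ij d. loc_mat q y \<alpha> \<beta> = 0"
  shows "Lf y (q * lpoly (Nset Ij (2 * d)) u) = 0"
proof -
  have "Lf y (q * lpoly (Nset Ij (2 * d)) u) =
        (\<Sum>\<alpha>\<in>Nset Ij (2 * d). u \<alpha> * (\<Sum>\<gamma>\<in>Poly_Mapping.keys q. Poly_Mapping.lookup q \<gamma> * y (\<gamma> + \<alpha>)))"
    unfolding lpoly_def by (simp add: Lf_sum sum_distrib_left Lf_mult_single)
  also have "\<dots> = 0"
  proof (rule sum.neutral, rule ballI)
    fix \<alpha> assume a: "\<alpha> \<in> Nset Ij (2 * d)"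
    then obtain \<beta> \<gamma> where bg: "\<alpha> = \<beta> + \<gamma>" "mdeg \<beta> \<le> d" "mdeg \<gamma> \<le> d"
      using split_mon[of \<alpha> d] unfolding Nset_def by auto
    have "\<beta> \<in> Nset Ij d" "\<gamma> \<in> Nset Ij d"
      using a bg unfolding Nset_def by (auto simp: keys_add_nat)
    then have "loc_mat q y \<beta> \<gamma> = 0" using hc by blast
    then have "(\<Sum>\<gamma>'\<in>Poly_Mapping.keys q. Poly_Mapping.lookup q \<gamma>' * y (\<gamma>' + \<alpha>)) = 0"
      unfolding loc_mat_def bg(1) by (simp add: add_ac)
    then show "u \<alpha> * (\<Sum>\<gamma>\<in>Poly_Mapping.keys q. Poly_Mapping.lookup q \<gamma> * y (\<gamma> + \<alpha>)) = 0" by simp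
  qed
  finally show ?thesis .
qed

lemma didx_Sigma: "didx g Ij Jj k = Sigma (blocks Jj) (bidx g Ij Jj k)"
  by (auto simp: didx_def)

lemma key:
  assumes feas: "lp_feasible g h Ij Jj Wj k \<xi> G u"
    and finI: "finite Ij" and finJ: "finite Jj"
    and hc: "\<forall>i\<in>Wj. \<forall>\<alpha>\<in>Nset Ij (k - hdeg (h i)). \<forall>\<beta>\<in>Nset Ij (k - hdeg (h i)). loc_mat (h i) y \<alpha> \<beta> = 0"
  shows "\<xi> * y 0 = (\<Sum>x\<in>didx g Ij Jj k. G (fst x) (snd x) (snd x) * Dmat g y x x)"
proof -
  have diag: "mdiagonal (bidx g Ij Jj k b) (G b)" if "b \<in> blocks Jj" for b
    using feas that unfolding lp_feasible_def by blast
  have eq: "pconst \<xi> = qpoly (Nset Ij k) (G None)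
        + (\<Sum>i\<in>Jj. g i * qpoly (Nset Ij (k - hdeg (g i))) (G (Some i)))
        + (\<Sum>i\<in>Wj. h i * lpoly (Nset Ij (2 * (k - hdeg (h i)))) (u i))"
    using feas unfolding lp_feasible_def by blast
  have d0: "mdiagonal (Nset Ij k) (G None)"
    using diag[of None] by (simp add: blocks_def bidx_def bdeg_def)
  have di: "mdiagonal (Nset Ij (k - hdeg (g i))) (G (Some i))" if "i \<in> Jj" for i
    using diag[of "Some i"] that by (simp add: blocks_def bidx_def bdeg_def)
  have "\<xi> * y 0 = Lf y (pconst \<xi>)" by simp
  also have "\<dots> = (\<Sum>\<alpha>\<in>Nset Ij k. G None \<alpha> \<alpha> * y (\<alpha> + \<alpha>))
      + (\<Sum>i\<in>Jj. \<Sum>\<alpha>\<in>Nset Ij (k - hdeg (g i)). G (Some i) \<alpha> \<alpha> * loc_mat (g i) y \<alpha> \<alpha>)"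
    unfolding eq Lf_add Lf_sum
    using Lf_qpoly[OF finite_Nset[OF finI] d0] Lf_mqpoly[OF finite_Nset[OF finI] di]
      Lf_mlpoly[of Ij _ "h _" y] hc
    by simp
  also have "\<dots> = (\<Sum>b\<in>blocks Jj. \<Sum>\<alpha>\<in>bidx g Ij Jj k b. G b \<alpha> \<alpha> * Dmat g y (b, \<alpha>) (b, \<alpha>))"
    unfolding blocks_def
    by (simp add: sum.reindex bidx_def bdeg_def Dmat_def blockdiag_def moment_mat_def finJ)
  also have "\<dots> = (\<Sum>x\<in>didx g Ij Jj k. G (fst x) (snd x) (snd x) * Dmat g y x x)"
    unfolding didx_Sigma
    by (subst sum.Sigma) (auto simp: finJ blocks_def bidx_def finite_Nset[OF finI] case_prod_unfold)
  finally show ?thesis .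
qed



lemma loc_mono: "loc_mat q (mono x) \<alpha> \<beta> = mono x (\<alpha> + \<beta>) * peval q x"
  unfolding loc_mat_def peval_def mono_add
  by (simp add: sum_distrib_left mono_def algebra_simps)

theorem lemma3:
  fixes n m l p :: nat
    and f :: rpoly and g h :: "nat \<Rightarrow> rpoly"
    and I J W :: "nat \<Rightarrow> nat set"
    and \<xi> :: "nat \<Rightarrow> nat \<Rightarrow> real"
    and G :: "nat \<Rightarrow> nat \<Rightarrow> nat option \<Rightarrow> mon \<Rightarrow> mon \<Rightarrow> real"
    and u :: "nat \<Rightarrow> nat \<Rightarrow> nat \<Rightarrow> mon \<Rightarrow> real"
  assumes "pvars f \<subseteq> {..<n}"
    and "\<forall>i<m. pvars (g i) \<subseteq> {..<n}"
    and "\<forall>i<l. pvars (h i) \<subseteq> {..<n}"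
    and "\<forall>j<p. I j \<subseteq> {..<n}"
    and "(\<Union>j<p. J j) = {..<m}" and "\<forall>j1<p. \<forall>j2<p. j1 \<noteq> j2 \<longrightarrow> J j1 \<inter> J j2 = {}"
    and "(\<Union>j<p. W j) = {..<l}" and "\<forall>j1<p. \<forall>j2<p. j1 \<noteq> j2 \<longrightarrow> W j1 \<inter> W j2 = {}"
    and "\<forall>j<p. \<forall>i\<in>J j. pvars (g i) \<subseteq> I j"
    and "\<forall>j<p. \<forall>i\<in>W j. pvars (h i) \<subseteq> I j"
    and "\<exists>x. (\<forall>i<m. peval (g i) x \<ge> 0) \<and> (\<forall>i<l. peval (h i) x = 0)"
    and "\<forall>k\<ge>kmin f g m h l. \<forall>j<p.
           lp_feasible g h (I j) (J j) (W j) k (\<xi> k j) (G k j) (u k j)"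
  shows "ctp_cs f g m h l p I J W \<xi>
           (\<lambda>k j. blockdiag (\<lambda>b. msqrt (bidx g (I j) (J j) k b) (G k j b)))"
  unfolding ctp_cs_def
proof (intro allI impI)
  fix k j assume kk: "kmin f g m h l \<le> k" and jp: "j < p"
  obtain x0 where x0: "\<forall>i<m. peval (g i) x0 \<ge> 0" "\<forall>i<l. peval (h i) x0 = 0"
    using assms(11) by blast
  have feas: "lp_feasible g h (I j) (J j) (W j) k (\<xi> k j) (G k j) (u k j)"
    using assms(12) kk jp by blast
  have finI: "finite (I j)" using assms(4) jp finite_subset by blast
  have Jm: "J j \<subseteq> {..<m}" using assms(5) jp by blast
  have Wl: "W j \<subseteq> {..<l}" using assms(7) jp by blast
  have finJ: "finite (J j)" using Jm finite_subset by blast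
  let ?D = "didx g (I j) (J j) k"
  let ?G = "G k j"
  let ?P = "blockdiag (\<lambda>b. msqrt (bidx g (I j) (J j) k b) (?G b))"
  have finB: "finite (bidx g (I j) (J j) k b)" for b
    by (simp add: bidx_def finite_Nset[OF finI])
  have finD: "finite ?D" unfolding didx_Sigma
    by (rule finite_SigmaI) (auto simp: blocks_def finJ finB)
  have ge1: "?G b \<alpha> \<alpha> \<ge> 1" if "b \<in> blocks (J j)" "\<alpha> \<in> bidx g (I j) (J j) k b" for b \<alpha>
    using feas that finB unfolding lp_feasible_def by (blast intro: psd_diag_ge1)
  have msq: "msqrt (bidx g (I j) (J j) k b) (?G b) = dsqrt (bidx g (I j) (J j) k b) (?G b)"
    if "b \<in> blocks (J j)" for b
  proof (rule msqrt_diag[OF finB])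
    show "mdiagonal (bidx g (I j) (J j) k b) (?G b)" using feas that unfolding lp_feasible_def by blast
    show "\<forall>a\<in>bidx g (I j) (J j) k b. 0 < ?G b a a" using ge1 that by fastforce
  qed
  define s where "s x = sqrt (?G (fst x) (snd x) (snd x))" for x
  have spos: "s x > 0" if "x \<in> ?D" for x
    using ge1 that unfolding s_def didx_def by fastforce
  have ss: "s x * s x = ?G (fst x) (snd x) (snd x)" if "x \<in> ?D" for x
    using ge1 that unfolding s_def didx_def by fastforce
  have Pform: "?P x z = (if x = z then s x else 0)" if "x \<in> ?D" "z \<in> ?D" for x z
    using that msq unfolding didx_def blockdiag_def s_def dsqrt_def by (auto simp: case_prod_unfold prod_eq_iff)
  have keyy: "\<xi> k j * y 0 = (\<Sum>x\<in>?D. ?G (fst x) (snd x) (snd x) * Dmat g y x x)"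
    if "\<forall>i\<in>W j. \<forall>\<alpha>\<in>Nset (I j) (k - hdeg (h i)). \<forall>\<beta>\<in>Nset (I j) (k - hdeg (h i)). loc_mat (h i) y \<alpha> \<beta> = 0" for y
    by (rule key[OF feas finI finJ that])
  show "0 < \<xi> k j
      \<and> pdef ?D (?P)
      \<and> (\<forall>x\<in>?D. \<forall>z\<in>?D. fst x \<noteq> fst z \<longrightarrow> ?P x z = 0)
      \<and> (\<forall>y. (\<forall>i\<in>W j. \<forall>\<alpha>\<in>Nset (I j) (k - hdeg (h i)). \<forall>\<beta>\<in>Nset (I j) (k - hdeg (h i)).
                 loc_mat (h i) y \<alpha> \<beta> = 0) \<longrightarrow> y 0 = 1 \<longrightarrow>
             mtrace ?D (mmult ?D (mmult ?D ?P (Dmat g y)) ?P) = \<xi> k j)"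
  proof (intro conjI allI impI ballI)
    have hc: "\<forall>i\<in>W j. \<forall>\<alpha>\<in>Nset (I j) (k - hdeg (h i)). \<forall>\<beta>\<in>Nset (I j) (k - hdeg (h i)). loc_mat (h i) (mono x0) \<alpha> \<beta> = 0"
      using x0(2) Wl by (auto simp: loc_mono)
    have nn: "0 \<le> ?G (fst x) (snd x) (snd x) * Dmat g (mono x0) x x" if "x \<in> ?D" for x
    proof -
      obtain b \<alpha> where x: "x = (b, \<alpha>)" by fastforce
      have "0 \<le> Dmat g (mono x0) x x"
      proof (cases b)
        case None
        then show ?thesis by (simp add: x Dmat_def blockdiag_def moment_mat_def mono_add)
      next
        case (Some i)
        then have "i \<in> J j" using that x by (auto simp: didx_def blocks_def)
        then have "peval (g i) x0 \<ge> 0" using x0(1) Jm by auto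
        then show ?thesis by (simp add: x Some Dmat_def blockdiag_def loc_mono mono_add)
      qed
      moreover have "?G (fst x) (snd x) (snd x) \<ge> 0" using ss[OF that] by (metis zero_le_square power2_eq_square)
      ultimately show ?thesis by simp
    qed
    have z: "(None, 0) \<in> ?D"
      by (simp add: didx_def blocks_def bidx_def bdeg_def Nset_def)
    have "1 \<le> ?G None 0 0 * Dmat g (mono x0) (None, 0) (None, 0)"
      using ge1[of None 0] z by (simp add: didx_def Dmat_def blockdiag_def moment_mat_def)
    also have "\<dots> \<le> (\<Sum>x\<in>?D. ?G (fst x) (snd x) (snd x) * Dmat g (mono x0) x x)"
      using member_le_sum[OF z, of "\<lambda>x. ?G (fst x) (snd x) (snd x) * Dmat g (mono x0) x x"] nn finD
      by simp
    also have "\<dots> = \<xi> k j" using keyy[OF hc] by simp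
    finally show "0 < \<xi> k j" by simp
  next
    show "pdef ?D ?P" by (rule pdef_diag[OF finD Pform spos])
  next
    fix x z assume "x \<in> ?D" "z \<in> ?D" "fst x \<noteq> fst z"
    then show "?P x z = 0" by (auto simp: blockdiag_def case_prod_unfold)
  next
    fix y assume hy: "\<forall>i\<in>W j. \<forall>\<alpha>\<in>Nset (I j) (k - hdeg (h i)). \<forall>\<beta>\<in>Nset (I j) (k - hdeg (h i)). loc_mat (h i) y \<alpha> \<beta> = 0"
      and y0: "y 0 = 1"
    have "mtrace ?D (mmult ?D (mmult ?D ?P (Dmat g y)) ?P) = (\<Sum>x\<in>?D. s x * s x * Dmat g y x x)"
      by (rule trace_diag[OF finD Pform])
    also have "\<dots> = (\<Sum>x\<in>?D. ?G (fst x) (snd x) (snd x) * Dmat g y x x)"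
      by (rule sum.cong[OF refl]) (simp add: ss)
    also have "\<dots> = \<xi> k j" using keyy[OF hy] y0 by simp
    finally show "mtrace ?D (mmult ?D (mmult ?D ?P (Dmat g y)) ?P) = \<xi> k j" .
  qed
qed

end
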